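(* Let $n\ge4$ be even, let $f=\mathrm{Jump}_{n/2-1}$, and let $k\in\{1,\dots,n/2-1\}$. Consider the procedure $\mathrm{moveFirst}_k(x,y)$ defined as follows: repeat (outer loop) — sample $x'$ from $x$ by flipping one position chosen uniformly at random among the positions where $x$ and $y$ agree; then perform up to $\lfloor 2\log_2 n\rfloor+1$ tests, each sampling $u$ from $x'$ by flipping $k-1$ positions chosen uniformly at random (without repetition) among the positions where $x'$ and $y$ differ and querying $f(u)$; if some test gives $f(u)=n/2$, stop the tests and restart the outer loop; if no test gives $f(u)=n/2$, return $x'$. Then $\mathrm{moveFirst}_k$ uses only binary unbiased variation operators, and if $(x,y)$ is an opposing $k$-pair, the following hold. (i) Let $X$ be a geometric random variable with success probability $1/2$ (number of trials up to and including the first success) and let $T$ be the number of fitness evaluations of one run; then $T$ is stochastically dominated by $(1+2\log_2 n)X$, also when conditioning on the output satisfying $d(x')=k+1$. (ii) With probability at least $1-(2\log_2 n)/n^2$, the output $x'$ satisfies $d(x')=k+1$, $H(x,x')=1$, and $H(x',y)=2k+1$.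
   Context: For $x\in\{0,1\}^n$ let $|x|_1=\sum_ix_i$ and $H$ the Hamming distance. For $n$ even, $\mathrm{Jump}_{n/2-1}(x)=n$ if $|x|_1=n$, $=n/2$ if $|x|_1=n/2$, and $=0$ otherwise. Let $d(x)=\big||x|_1-n/2\big|$ and $\mathrm{sgn}(x)\in\{-1,0,+1\}$ the sign of $|x|_1-n/2$. A pair $(x,y)$ is an opposing $k$-pair if $\mathrm{sgn}(x)\,\mathrm{sgn}(y)=-1$, $d(x)=d(y)=k$, and $H(x,y)=2k$. A binary unbiased variation operator samples from a family $(D(\cdot\mid y^{(1)},y^{(2)}))$ of distributions on $\{0,1\}^n$ invariant under XOR-ing all arguments with a common $z$ and under applying a common permutation of positions to all arguments. *)

theory Defs
  imports "HOL-Probability.Probability"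
begin

text \<open>Bit strings in {0,1}^n are modelled as bool lists of length n (True = 1).\<close>

definition ones :: "bool list \<Rightarrow> nat" where
  "ones x = length (filter id x)"

definition hamming :: "bool list \<Rightarrow> bool list \<Rightarrow> nat" where
  "hamming x y = card {i. i < length x \<and> x ! i \<noteq> y ! i}"

definition jumpf :: "nat \<Rightarrow> bool list \<Rightarrow> nat" where
  "jumpf n x = (if ones x = n then n else if ones x = n div 2 then n div 2 else 0)"

definition dd :: "nat \<Rightarrow> bool list \<Rightarrow> nat" where
  "dd n x = nat \<bar>int (ones x) - int (n div 2)\<bar>"

definition sgnh :: "nat \<Rightarrow> bool list \<Rightarrow> int" where
  "sgnh n x = sgn (int (ones x) - int (n div 2))"

definition opposing_pair :: "nat \<Rightarrow> nat \<Rightarrow> bool list \<Rightarrow> bool list \<Rightarrow> bool" where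
  "opposing_pair n k x y \<longleftrightarrow> length x = n \<and> length y = n \<and>
     sgnh n x * sgnh n y = -1 \<and> dd n x = k \<and> dd n y = k \<and> hamming x y = 2 * k"

definition flip :: "nat set \<Rightarrow> bool list \<Rightarrow> bool list" where
  "flip S x = map (\<lambda>i. x ! i \<noteq> (i \<in> S)) [0..<length x]"

definition xorl :: "bool list \<Rightarrow> bool list \<Rightarrow> bool list" where
  "xorl z x = map2 (\<noteq>) z x"

definition permute :: "(nat \<Rightarrow> nat) \<Rightarrow> bool list \<Rightarrow> bool list" where
  "permute \<sigma> x = map (\<lambda>i. x ! \<sigma> i) [0..<length x]"

definition unbiased2 :: "nat \<Rightarrow> (bool list \<Rightarrow> bool list \<Rightarrow> bool list pmf) \<Rightarrow> bool" where
  "unbiased2 n D \<longleftrightarrow>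
     (\<forall>x y. length x = n \<longrightarrow> length y = n \<longrightarrow> set_pmf (D x y) \<subseteq> {u. length u = n}) \<and>
     (\<forall>x y z. length x = n \<longrightarrow> length y = n \<longrightarrow> length z = n \<longrightarrow>
        map_pmf (xorl z) (D x y) = D (xorl z x) (xorl z y)) \<and>
     (\<forall>x y \<sigma>. length x = n \<longrightarrow> length y = n \<longrightarrow> \<sigma> permutes {..<n} \<longrightarrow>
        map_pmf (permute \<sigma>) (D x y) = D (permute \<sigma> x) (permute \<sigma> y))"

definition flip_agree :: "bool list \<Rightarrow> bool list \<Rightarrow> bool list pmf" where
  "flip_agree x y = (let A = {i. i < length x \<and> x ! i = y ! i} in
     if A = {} then return_pmf x else map_pmf (\<lambda>i. flip {i} x) (pmf_of_set A))"

definition flip_differ :: "nat \<Rightarrow> bool list \<Rightarrow> bool list \<Rightarrow> bool list pmf" where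
  "flip_differ m x y = (let Ss = {S. S \<subseteq> {i. i < length x \<and> x ! i \<noteq> y ! i} \<and> card S = m} in
     if Ss = {} then return_pmf x else map_pmf (\<lambda>S. flip S x) (pmf_of_set Ss))"

text \<open>Up to j tests: result (some test gave f(u) = n/2, number of fitness evaluations).\<close>
fun tests :: "nat \<Rightarrow> nat \<Rightarrow> bool list \<Rightarrow> bool list \<Rightarrow> nat \<Rightarrow> (bool \<times> nat) pmf" where
  "tests n k x' y 0 = return_pmf (False, 0)"
| "tests n k x' y (Suc j) = do {
     u \<leftarrow> flip_differ (k - 1) x' y;
     if jumpf n u = n div 2 then return_pmf (True, 1)
     else map_pmf (\<lambda>(b, c). (b, Suc c)) (tests n k x' y j) }"

definition num_tests :: "nat \<Rightarrow> nat" where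
  "num_tests n = nat \<lfloor>2 * log 2 (real n)\<rfloor> + 1"

text \<open>moveFirst_k with an accumulator t of fitness evaluations so far; outputs (x', T).\<close>
partial_function (spmf) mf_loop ::
  "nat \<Rightarrow> nat \<Rightarrow> bool list \<Rightarrow> bool list \<Rightarrow> nat \<Rightarrow> (bool list \<times> nat) spmf" where
  "mf_loop n k x y t = do {
     x' \<leftarrow> spmf_of_pmf (flip_agree x y);
     (b, c) \<leftarrow> spmf_of_pmf (tests n k x' y (num_tests n));
     if b then mf_loop n k x y (t + c) else return_spmf (x', t + c) }"

definition moveFirst :: "nat \<Rightarrow> nat \<Rightarrow> bool list \<Rightarrow> bool list \<Rightarrow> (bool list \<times> nat) spmf" where
  "moveFirst n k x y = mf_loop n k x y 0"

end

theory Submission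
  imports Defs
begin


lemma length_flip[simp]: "length (flip S x) = length x" by (simp add: flip_def)
lemma nth_flip[simp]: "i < length x \<Longrightarrow> flip S x ! i = (x!i \<noteq> (i\<in>S))" by (simp add: flip_def)

lemma ones_card: "ones x = card {i. i < length x \<and> x!i}"
  unfolding ones_def length_filter_conv_card by simp

lemma card_split: "card {i. i < (n::nat) \<and> P i} = card {i. i < n \<and> P i \<and> Q i} + card {i. i < n \<and> P i \<and> \<not> Q i}"
proof -
  have e: "{i. i<n \<and> P i} = {i. i<n \<and> P i \<and> Q i} \<union> {i. i<n \<and> P i \<and> \<not>Q i}" by blast
  have fin: "\<And>R. finite {i. i < n \<and> R i}" by (rule finite_subset[of _ "{..<n}"]) auto
  show ?thesis by (subst e, rule card_Un_disjoint) (use fin in auto)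
qed

lemma card0_D: "card {i. i < (n::nat) \<and> P i} = 0 \<Longrightarrow> i < n \<Longrightarrow> \<not> P i"
proof -
  assume a: "card {i. i < n \<and> P i} = 0" "i < n"
  have "finite {i. i < n \<and> P i}" by (rule finite_subset[of _ "{..<n}"]) auto
  then have "{i. i < n \<and> P i} = {}" using a(1) by simp
  then show ?thesis using a(2) by blast
qed

lemma ones_flip:
  assumes S: "S \<subseteq> {..<length z}"
  shows "int (ones (flip S z)) = int (ones z) - int (card {j\<in>S. z!j}) + int (card {j\<in>S. \<not> z!j})"
proof -
  define X where "X = {j. j < length z \<and> z!j}"
  have fS: "finite S" using S finite_subset by blast
  have e1: "{j. j < length (flip S z) \<and> flip S z ! j} = (X - S) \<union> {j\<in>S. \<not>z!j}"
    using S unfolding X_def by auto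
  have d: "(X - S) \<inter> {j\<in>S. \<not>z!j} = {}" by blast
  have e2: "X \<inter> S = {j\<in>S. z!j}" using S unfolding X_def by auto
  have fX: "finite X" unfolding X_def by simp
  have c1: "card (X - S) + card (X \<inter> S) = card X"
  proof -
    have "X = (X - S) \<union> (X \<inter> S)" by blast
    then have "card X = card ((X - S) \<union> (X \<inter> S))" by simp
    also have "\<dots> = card (X - S) + card (X \<inter> S)" by (rule card_Un_disjoint) (use fX in auto)
    finally show ?thesis by simp
  qed
  have "ones (flip S z) = card (X - S) + card {j\<in>S. \<not>z!j}"
    unfolding ones_card e1 by (rule card_Un_disjoint) (use fX fS in auto)
  moreover have "ones z = card X" unfolding ones_card X_def ..
  ultimately show ?thesis using c1 e2 by simp
qed

lemma ones_flip_const: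
  assumes S: "S \<subseteq> {..<length z}" and w: "\<forall>j\<in>S. z!j = w"
  shows "int (ones (flip S z)) = int (ones z) + (if w then - int (card S) else int (card S))"
proof -
  have "{j\<in>S. z!j} = (if w then S else {})" "{j\<in>S. \<not>z!j} = (if w then {} else S)" using w by auto
  then show ?thesis using ones_flip[OF S] by simp
qed

lemma jumpf_eq: "4 \<le> n \<Longrightarrow> jumpf n u = n div 2 \<longleftrightarrow> ones u = n div 2"
  unfolding jumpf_def by auto

lemma half_card:
  assumes fE: "finite E" and iE: "i \<in> E" and m: "2*m \<le> card E - 1"
  shows "2 * card {S. S \<subseteq> E \<and> card S = m \<and> i \<in> S} \<le> card {S. S \<subseteq> E \<and> card S = m}"
proof -
  define E' where "E' = E - {i}"
  have fE': "finite E'" using fE by (simp add: E'_def)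
  have cE': "card E' = card E - 1" using fE iE by (simp add: E'_def)
  have out: "{S. S \<subseteq> E \<and> card S = m \<and> i \<notin> S} = {S. S \<subseteq> E' \<and> card S = m}"
    unfolding E'_def by blast
  have cout: "card {S. S \<subseteq> E \<and> card S = m \<and> i \<notin> S} = card E' choose m"
    unfolding out by (rule n_subsets[OF fE'])
  have cin: "card {S. S \<subseteq> E \<and> card S = m \<and> i \<in> S} \<le> card E' choose m"
  proof (cases m)
    case 0
    have em: "{S. S \<subseteq> E \<and> card S = m \<and> i \<in> S} = {}"
    proof (intro equalityI subsetI)
      fix S assume "S \<in> {S. S \<subseteq> E \<and> card S = m \<and> i \<in> S}"
      then have "S \<subseteq> E" "card S = 0" "i \<in> S" using 0 by auto
      moreover have "finite S" using \<open>S \<subseteq> E\<close> fE finite_subset by blast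
      ultimately show "S \<in> {}" by simp
    qed simp
    show ?thesis unfolding em by simp
  next
    case (Suc m')
    have e: "{S. S \<subseteq> E \<and> card S = m \<and> i \<in> S} = insert i ` {T. T \<subseteq> E' \<and> card T = m'}"
    proof (intro equalityI subsetI)
      fix S assume "S \<in> {S. S \<subseteq> E \<and> card S = m \<and> i \<in> S}"
      then have S: "S \<subseteq> E" "card S = Suc m'" "i \<in> S" using Suc by auto
      have fS: "finite S" using S(1) fE finite_subset by blast
      have "S - {i} \<subseteq> E'" "card (S - {i}) = m'" using S fS by (auto simp: E'_def)
      moreover have "S = insert i (S - {i})" using S by blast
      ultimately show "S \<in> insert i ` {T. T \<subseteq> E' \<and> card T = m'}" by blast
    next
      fix S assume "S \<in> insert i ` {T. T \<subseteq> E' \<and> card T = m'}"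
      then obtain T where T: "T \<subseteq> E'" "card T = m'" "S = insert i T" by blast
      have "finite T" using T(1) fE' finite_subset by blast
      moreover have "i \<notin> T" using T(1) by (auto simp: E'_def)
      ultimately show "S \<in> {S. S \<subseteq> E \<and> card S = m \<and> i \<in> S}"
        using T iE Suc by (auto simp: E'_def)
    qed
    have inj: "inj_on (insert i) {T. T \<subseteq> E' \<and> card T = m'}"
      unfolding inj_on_def E'_def by blast
    have "card {S. S \<subseteq> E \<and> card S = m \<and> i \<in> S} = card E' choose m'"
      unfolding e card_image[OF inj] by (rule n_subsets[OF fE'])
    also have "\<dots> \<le> card E' choose m" using m cE' Suc by (intro binomial_mono) auto
    finally show ?thesis .
  qed
  have "card {S. S \<subseteq> E \<and> card S = m} = card {S. S \<subseteq> E \<and> card S = m \<and> i \<in> S} + card {S. S \<subseteq> E \<and> card S = m \<and> i \<notin> S}"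
  proof -
    have fin: "finite {S. S \<subseteq> E \<and> card S = m}" by (rule finite_subset[of _ "Pow E"]) (auto simp: fE)
    have "{S. S \<subseteq> E \<and> card S = m} = {S. S \<subseteq> E \<and> card S = m \<and> i \<in> S} \<union> {S. S \<subseteq> E \<and> card S = m \<and> i \<notin> S}" by blast
    then show ?thesis using fin by (simp add: card_Un_disjoint[symmetric]) (subst card_Un_disjoint, auto intro: finite_subset[OF _ fin])
  qed
  then show ?thesis using cin cout by simp
qed



lemma length_xorl[simp]: "length (xorl z x) = min (length z) (length x)" by (simp add: xorl_def)
lemma nth_xorl[simp]: "i < length z \<Longrightarrow> i < length x \<Longrightarrow> xorl z x ! i = (z!i \<noteq> x!i)"
  by (simp add: xorl_def)
lemma length_permute[simp]: "length (permute s x) = length x" by (simp add: permute_def)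
lemma nth_permute[simp]: "i < length x \<Longrightarrow> permute s x ! i = x ! s i" by (simp add: permute_def)

lemma flip_xorl: "length z = length x \<Longrightarrow> xorl z (flip S x) = flip S (xorl z x)"
  by (rule nth_equalityI) auto

lemma permute_flip:
  assumes "s permutes {..<n}" "length x = n"
  shows "permute s (flip S x) = flip (inv s ` S) (permute s x)"
proof (rule nth_equalityI)
  fix j assume j: "j < length (permute s (flip S x))"
  have sj: "s j < n" using j assms permutes_in_image[OF assms(1)] by auto
  have "(j \<in> inv s ` S) = (s j \<in> S)"
    using permutes_inverses[OF assms(1)] by (metis image_iff)
  then show "permute s (flip S x) ! j = flip (inv s ` S) (permute s x) ! j"
    using j sj assms by simp
qed simp

lemma perm_set:
  assumes s: "s permutes {..<n}" and l: "length x = n" "length y = n"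
  shows "{i. i < length (permute s x) \<and> P (permute s x ! i) (permute s y ! i)} = s -` {i. i < length x \<and> P (x!i) (y!i)}"
proof (rule set_eqI)
  fix i
  have L1: "s i < n \<longleftrightarrow> i < n" using permutes_in_image[of s "{..<n}" i] s by simp
  have "i \<in> {i. i < length (permute s x) \<and> P (permute s x ! i) (permute s y ! i)} \<longleftrightarrow> i < n \<and> P (x ! s i) (y ! s i)"
    using l by auto
  also have "\<dots> \<longleftrightarrow> s i < n \<and> P (x ! s i) (y ! s i)" using L1 by simp
  also have "\<dots> \<longleftrightarrow> i \<in> s -` {i. i < length x \<and> P (x!i) (y!i)}" using l by simp
  finally show "i \<in> {i. i < length (permute s x) \<and> P (permute s x ! i) (permute s y ! i)} \<longleftrightarrow> i \<in> s -` {i. i < length x \<and> P (x!i) (y!i)}" .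
qed

lemma unb_agree: "unbiased2 n flip_agree"
  unfolding unbiased2_def
proof (intro conjI allI impI)
  fix x y :: "bool list" assume "length x = n" "length y = n"
  then show "set_pmf (flip_agree x y) \<subseteq> {u. length u = n}"
    by (auto simp: flip_agree_def Let_def split: if_splits)
next
  fix x y z :: "bool list" assume l: "length x = n" "length y = n" "length z = n"
  have A: "{i. i < length (xorl z x) \<and> xorl z x ! i = xorl z y ! i} = {i. i < length x \<and> x!i = y!i}"
    using l by auto
  have F: "\<And>i. xorl z (flip {i} x) = flip {i} (xorl z x)" using l by (simp add: flip_xorl)
  show "map_pmf (xorl z) (flip_agree x y) = flip_agree (xorl z x) (xorl z y)"
    unfolding flip_agree_def Let_def A if_distrib[of "map_pmf (xorl z)"] map_return_pmf pmf.map_comp o_def F ..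
next
  fix x y :: "bool list" and s assume l: "length x = n" "length y = n" and s: "s permutes {..<n}"
  define A where "A = {i. i < length x \<and> x!i = y!i}"
  have A': "{i. i < length (permute s x) \<and> permute s x ! i = permute s y ! i} = inv s ` A"
  proof -
    have "{i. i < length (permute s x) \<and> permute s x ! i = permute s y ! i} = s -` A"
      using perm_set[OF s l, of "(=)"] by (simp add: A_def)
    also have "\<dots> = inv s ` A" using permutes_bij[OF s] by (simp add: bij_vimage_eq_inv_image)
    finally show ?thesis .
  qed
  have fin: "finite A" by (simp add: A_def)
  have inj: "inj_on (inv s) A" using permutes_inj[OF permutes_inv[OF s]] by (simp add: inj_on_def inj_def)
  show "map_pmf (permute s) (flip_agree x y) = flip_agree (permute s x) (permute s y)"
  proof (cases "A = {}")
    case True then show ?thesis unfolding flip_agree_def Let_def A' A_def[symmetric] by simp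
  next
    case False
    have "flip_agree (permute s x) (permute s y) = map_pmf (\<lambda>i. flip {i} (permute s x)) (pmf_of_set (inv s ` A))"
      unfolding flip_agree_def Let_def A' using False by simp
    also have "\<dots> = map_pmf (\<lambda>i. flip {inv s i} (permute s x)) (pmf_of_set A)"
      by (simp add: map_pmf_of_set_inj[OF inj False fin, symmetric] pmf.map_comp o_def)
    also have "\<dots> = map_pmf (permute s) (flip_agree x y)"
      unfolding flip_agree_def Let_def A_def[symmetric] using False
      by (simp add: pmf.map_comp o_def permute_flip[OF s l(1)])
    finally show ?thesis ..
  qed
qed

lemma unb_differ: "unbiased2 n (flip_differ m)"
  unfolding unbiased2_def
proof (intro conjI allI impI)
  fix x y :: "bool list" assume "length x = n" "length y = n"
  then show "set_pmf (flip_differ m x y) \<subseteq> {u. length u = n}"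
    unfolding flip_differ_def Let_def
    by (auto split: if_splits simp: set_pmf_of_set finite_subset[of _ "{i. i < length x}"])
next
  fix x y z :: "bool list" assume l: "length x = n" "length y = n" "length z = n"
  have A: "{i. i < length (xorl z x) \<and> xorl z x ! i \<noteq> xorl z y ! i} = {i. i < length x \<and> x!i \<noteq> y!i}"
    using l by auto
  have F2: "\<And>S. xorl z (flip S x) = flip S (xorl z x)" using l by (simp add: flip_xorl)
  show "map_pmf (xorl z) (flip_differ m x y) = flip_differ m (xorl z x) (xorl z y)"
    unfolding flip_differ_def Let_def A if_distrib[of "map_pmf (xorl z)"] map_return_pmf pmf.map_comp o_def F2 ..
next
  fix x y :: "bool list" and s assume l: "length x = n" "length y = n" and s: "s permutes {..<n}"
  define D where "D = {i. i < length x \<and> x!i \<noteq> y!i}"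
  define Ss where "Ss = {S. S \<subseteq> D \<and> card S = m}"
  have bs: "bij (inv s)" by (rule permutes_bij[OF permutes_inv[OF s]])
  have D': "{i. i < length (permute s x) \<and> permute s x ! i \<noteq> permute s y ! i} = inv s ` D"
  proof -
    have "{i. i < length (permute s x) \<and> permute s x ! i \<noteq> permute s y ! i} = s -` D"
      using perm_set[OF s l, of "(\<noteq>)"] by (simp add: D_def)
    also have "\<dots> = inv s ` D" using permutes_bij[OF s] by (simp add: bij_vimage_eq_inv_image)
    finally show ?thesis .
  qed
  have Ss': "{S. S \<subseteq> inv s ` D \<and> card S = m} = image (inv s) ` Ss"
  proof (intro equalityI subsetI)
    fix S assume "S \<in> {S. S \<subseteq> inv s ` D \<and> card S = m}"
    then have S: "S \<subseteq> inv s ` D" "card S = m" by auto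
    have e: "S = inv s ` (s ` S)" using permutes_inverses[OF s] by (auto simp: image_iff)
    have "s ` S \<subseteq> D" using S(1) permutes_inverses[OF s] by auto
    moreover have "card (s ` S) = m" using S(2) permutes_inj[OF s]
      by (simp add: card_image inj_on_def inj_def)
    ultimately show "S \<in> image (inv s) ` Ss" unfolding Ss_def using e by blast
  next
    fix S assume "S \<in> image (inv s) ` Ss"
    then obtain T where T: "T \<subseteq> D" "card T = m" "S = inv s ` T" by (auto simp: Ss_def)
    then show "S \<in> {S. S \<subseteq> inv s ` D \<and> card S = m}" using bs
      by (auto simp: card_image bij_def inj_on_def inj_def)
  qed
  have fin: "finite Ss" unfolding Ss_def by (rule finite_subset[of _ "Pow D"]) (auto simp: D_def)
  have inj: "inj_on (image (inv s)) Ss" using bs by (simp add: bij_def inj_image_eq_iff inj_on_def)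
  show "map_pmf (permute s) (flip_differ m x y) = flip_differ m (permute s x) (permute s y)"
  proof (cases "Ss = {}")
    case True then show ?thesis unfolding flip_differ_def Let_def D' Ss' D_def[symmetric] Ss_def[symmetric] by simp
  next
    case False
    have "flip_differ m (permute s x) (permute s y) = map_pmf (\<lambda>S. flip S (permute s x)) (pmf_of_set (image (inv s) ` Ss))"
      unfolding flip_differ_def Let_def D' Ss' using False by simp
    also have "\<dots> = map_pmf (\<lambda>S. flip (inv s ` S) (permute s x)) (pmf_of_set Ss)"
      by (simp add: map_pmf_of_set_inj[OF inj False fin, symmetric] pmf.map_comp o_def)
    also have "\<dots> = map_pmf (permute s) (flip_differ m x y)"
      unfolding flip_differ_def Let_def D_def[symmetric] Ss_def[symmetric] using False
      by (simp add: pmf.map_comp o_def permute_flip[OF s l(1)])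
    finally show ?thesis ..
  qed
qed



lemma card_cong: "(\<And>i. i < (n::nat) \<Longrightarrow> P i = Q i) \<Longrightarrow> card {i. i < n \<and> P i} = card {i. i < n \<and> Q i}"
  by (rule arg_cong[where f=card]) auto

locale opp =
  fixes n k :: nat and x y :: "bool list"
  assumes even_n: "even n" and n4: "4 \<le> n" and k1: "1 \<le> k" and kh: "k \<le> n div 2 - 1"
    and op: "opposing_pair n k x y"
begin

definition "h = n div 2"
definition "v = (h < ones x)"
definition "sg = (if v then 1 else -1 :: int)"
definition "Dset = {i. i < n \<and> x!i \<noteq> y!i}"
definition "Aset = {i. i < n \<and> x!i = y!i}"

lemma lx: "length x = n" and ly: "length y = n" using op by (auto simp: opposing_pair_def)
lemma n2h: "n = 2*h" using even_n by (simp add: h_def)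
lemma kh': "k + 1 \<le> h" using kh k1 n4 by (simp add: h_def)

lemma ones_xy: "int (ones x) = int h + sg * int k \<and> int (ones y) = int h - sg * int k"
proof -
  have dx: "nat \<bar>int (ones x) - int h\<bar> = k" using op by (simp add: opposing_pair_def dd_def h_def)
  have dy: "nat \<bar>int (ones y) - int h\<bar> = k" using op by (simp add: opposing_pair_def dd_def h_def)
  have s: "sgn (int (ones x) - int h) * sgn (int (ones y) - int h) = -1"
    using op by (simp add: opposing_pair_def sgnh_def h_def)
  have dx': "\<bar>int (ones x) - int h\<bar> = int k" using dx by (simp add: nat_eq_iff)
  have dy': "\<bar>int (ones y) - int h\<bar> = int k" using dy by (simp add: nat_eq_iff)
  have "(int (ones x) > h \<and> int (ones y) < h) \<or> (int (ones x) < h \<and> int (ones y) > h)"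
    using s by (auto simp: sgn_if split: if_splits)
  then show ?thesis
  proof
    assume a: "int (ones x) > h \<and> int (ones y) < h"
    then have "v" unfolding v_def by simp
    then show ?thesis using a dx' dy' by (simp add: sg_def abs_if split: if_splits)
  next
    assume a: "int (ones x) < h \<and> int (ones y) > h"
    then have "\<not> v" unfolding v_def by simp
    then show ?thesis using a dx' dy' by (simp add: sg_def abs_if split: if_splits)
  qed
qed

definition "d1 = card {i. i < n \<and> x!i \<noteq> y!i \<and> x!i}"
definition "d0 = card {i. i < n \<and> x!i \<noteq> y!i \<and> \<not> x!i}"
definition "a1 = card {i. i < n \<and> x!i = y!i \<and> x!i}"
definition "a0 = card {i. i < n \<and> x!i = y!i \<and> \<not> x!i}"

lemma counts: "ones x = d1 + a1" "ones y = d0 + a1" "d1 + d0 = 2*k" "n = d1 + d0 + a1 + a0"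
proof -
  have "ones x = card {i. i < n \<and> x!i}" unfolding ones_card lx ..
  also have "\<dots> = card {i. i < n \<and> x!i \<and> x!i \<noteq> y!i} + card {i. i < n \<and> x!i \<and> \<not> x!i \<noteq> y!i}"
    by (rule card_split)
  also have "\<dots> = d1 + a1" unfolding d1_def a1_def by (intro arg_cong2[where f="(+)"] card_cong) auto
  finally show "ones x = d1 + a1" .
  have "ones y = card {i. i < n \<and> y!i}" unfolding ones_card ly ..
  also have "\<dots> = card {i. i < n \<and> y!i \<and> x!i \<noteq> y!i} + card {i. i < n \<and> y!i \<and> \<not> x!i \<noteq> y!i}"
    by (rule card_split)
  also have "\<dots> = d0 + a1" unfolding d0_def a1_def by (intro arg_cong2[where f="(+)"] card_cong) auto
  finally show "ones y = d0 + a1" .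
  have "2*k = card {i. i < n \<and> x!i \<noteq> y!i}" using op lx by (simp add: opposing_pair_def hamming_def)
  also have "\<dots> = card {i. i < n \<and> x!i \<noteq> y!i \<and> x!i} + card {i. i < n \<and> x!i \<noteq> y!i \<and> \<not> x!i}"
    by (rule card_split)
  finally show "d1 + d0 = 2*k" unfolding d1_def d0_def by simp
  have "n = card {i. i < n \<and> True}" by simp
  also have "\<dots> = card {i. i < n \<and> True \<and> x!i \<noteq> y!i} + card {i. i < n \<and> True \<and> \<not> x!i \<noteq> y!i}"
    by (rule card_split)
  also have "card {i. i < n \<and> True \<and> x!i \<noteq> y!i} = d1 + d0"
    unfolding d1_def d0_def by (subst card_split[of n _ "\<lambda>i. x!i"]) (intro arg_cong2[where f="(+)"] card_cong; auto)
  also have "card {i. i < n \<and> True \<and> \<not> x!i \<noteq> y!i} = a1 + a0"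
    unfolding a1_def a0_def by (subst card_split[of n _ "\<lambda>i. x!i"]) (intro arg_cong2[where f="(+)"] card_cong; auto)
  finally show "n = d1 + d0 + a1 + a0" by simp
qed

lemma struct:
  "\<And>i. i < n \<Longrightarrow> x!i \<noteq> y!i \<Longrightarrow> x!i = v"
  "card {i. i < n \<and> x!i = y!i \<and> x!i = v} = h - k"
  "card {i. i < n \<and> x!i = y!i \<and> x!i \<noteq> v} = h - k"
proof -
  have ox: "int (ones x) = int h + sg * int k" and oy: "int (ones y) = int h - sg * int k"
    using ones_xy by auto
  note c = counts
  have hk: "k + 1 \<le> h" by (rule kh')
  have nh: "n = 2*h" by (rule n2h)
  show "\<And>i. i < n \<Longrightarrow> x!i \<noteq> y!i \<Longrightarrow> x!i = v"
  proof (cases v)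
    case True
    then have "d0 = 0" using ox oy c by (simp add: sg_def)
    then show "\<And>i. i < n \<Longrightarrow> x!i \<noteq> y!i \<Longrightarrow> x!i = v" using True card0_D[of n "\<lambda>i. x!i \<noteq> y!i \<and> \<not> x!i"]
      unfolding d0_def by blast
  next
    case False
    then have "d1 = 0" using ox oy c by (simp add: sg_def)
    then show "\<And>i. i < n \<Longrightarrow> x!i \<noteq> y!i \<Longrightarrow> x!i = v" using False card0_D[of n "\<lambda>i. x!i \<noteq> y!i \<and> x!i"]
      unfolding d1_def by blast
  qed
  have "a1 = h - k \<and> a0 = h - k" 
  proof (cases v)
    case True
    then have "int (ones x) = int h + int k" "int (ones y) = int h - int k" using ox oy by (simp_all add: sg_def)
    then show ?thesis using c hk nh by arith
  next
    case False
    then have "int (ones x) = int h - int k" "int (ones y) = int h + int k" using ox oy by (simp_all add: sg_def)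
    then show ?thesis using c hk nh by arith
  qed
  then show "card {i. i < n \<and> x!i = y!i \<and> x!i = v} = h - k"
    "card {i. i < n \<and> x!i = y!i \<and> x!i \<noteq> v} = h - k"
    unfolding a1_def a0_def by (cases v; simp)+
qed

lemma cardD: "card Dset = 2*k"
  using op lx by (simp add: opposing_pair_def hamming_def Dset_def)

lemma ones_x: "int (ones x) = int h + sg * int k" using ones_xy by simp

lemma cardA: "card Aset = 2*(h-k)"
proof -
  have "card Aset = card {i. i < n \<and> x!i = y!i \<and> x!i = v} + card {i. i < n \<and> x!i = y!i \<and> \<not> x!i = v}"
    unfolding Aset_def by (rule card_split)
  then show ?thesis using struct by simp
qed

lemma finA: "finite Aset" unfolding Aset_def by (rule finite_subset[of _ "{..<n}"]) auto
lemma finD: "finite Dset" unfolding Dset_def by (rule finite_subset[of _ "{..<n}"]) auto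
lemma A_ne: "Aset \<noteq> {}" using cardA kh' by auto

lemma fa_eq: "flip_agree x y = map_pmf (\<lambda>i. flip {i} x) (pmf_of_set Aset)"
proof -
  have e: "{i. i < length x \<and> x ! i = y ! i} = Aset" using lx by (simp add: Aset_def)
  show ?thesis unfolding flip_agree_def Let_def e using A_ne by simp
qed

lemma flip_ones: "i < n \<Longrightarrow> int (ones (flip {i} x)) = int (ones x) + (if x!i then -1 else 1)"
  using ones_flip_const[of "{i}" x "x!i"] lx by simp

lemma flip_diff: "i \<in> Aset \<Longrightarrow> {j. j < length (flip {i} x) \<and> flip {i} x ! j \<noteq> y!j} = insert i Dset"
  unfolding Aset_def Dset_def using lx by auto

lemma flip_valD: "i \<in> Aset \<Longrightarrow> j \<in> Dset \<Longrightarrow> flip {i} x ! j = v"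
  unfolding Aset_def Dset_def using lx struct(1) by auto

lemma iD: "i \<in> Aset \<Longrightarrow> i \<notin> Dset" unfolding Aset_def Dset_def by auto

definition "good x' \<longleftrightarrow> dd n x' = k + 1 \<and> hamming x x' = 1 \<and> hamming x' y = 2*k+1"

lemma good_ones: "i \<in> Aset \<Longrightarrow> x!i \<noteq> v \<Longrightarrow> int (ones (flip {i} x)) = int h + sg * (int k + 1)"
  using flip_ones[of i] ones_x by (cases v) (auto simp: Aset_def sg_def)

lemma bad_ones: "i \<in> Aset \<Longrightarrow> x!i = v \<Longrightarrow> int (ones (flip {i} x)) = int h + sg * (int k - 1)"
  using flip_ones[of i] ones_x by (cases v) (auto simp: Aset_def sg_def)

lemma good_flip: assumes i: "i \<in> Aset" "x!i \<noteq> v" shows "good (flip {i} x)"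
proof -
  have "dd n (flip {i} x) = k + 1" using good_ones[OF i] unfolding dd_def h_def[symmetric]
    by (simp add: sg_def split: if_splits)
  moreover have "hamming x (flip {i} x) = 1"
  proof -
    have "{j. j < length x \<and> x ! j \<noteq> flip {i} x ! j} = {i}" using i lx by (auto simp: Aset_def)
    then show ?thesis by (simp add: hamming_def)
  qed
  moreover have "hamming (flip {i} x) y = 2*k+1"
    unfolding hamming_def flip_diff[OF i(1)] using finD iD[OF i(1)] cardD by simp
  ultimately show ?thesis by (simp add: good_def)
qed

lemma bad_dd: assumes i: "i \<in> Aset" "x!i = v" shows "dd n (flip {i} x) \<noteq> k + 1"
  using bad_ones[OF i] k1 unfolding dd_def h_def[symmetric] by (simp add: sg_def split: if_splits)

lemma jumpf_h: "jumpf n u = n div 2 \<longleftrightarrow> ones u = h" using jumpf_eq[OF n4] by (simp add: h_def)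

lemma good_tests: assumes i: "i \<in> Aset" "x!i \<noteq> v" and u: "u \<in> set_pmf (flip_differ (k-1) (flip {i} x) y)"
  shows "jumpf n u \<noteq> n div 2"
proof -
  define x' where "x' = flip {i} x"
  have lx': "length x' = n" using lx by (simp add: x'_def)
  have E: "{j. j < length x' \<and> x' ! j \<noteq> y!j} = insert i Dset" unfolding x'_def by (rule flip_diff[OF i(1)])
  have vals: "\<forall>j \<in> insert i Dset. x'!j = v" using flip_valD[OF i(1)] i lx by (auto simp: x'_def Aset_def)
  have ox': "int (ones x') = int h + sg * (int k + 1)" unfolding x'_def by (rule good_ones[OF i])
  have "ones u \<noteq> h"
  proof (cases "{S. S \<subseteq> insert i Dset \<and> card S = k - 1} = {}")
    case True
    then have "u = x'" using u unfolding flip_differ_def Let_def x'_def[symmetric] E by simp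
    then show ?thesis using ox' by (cases v) (auto simp: sg_def)
  next
    case False
    define Ss where "Ss = {S. S \<subseteq> insert i Dset \<and> card S = k - 1}"
    have fin: "finite Ss" unfolding Ss_def
      by (rule finite_subset[of _ "Pow (insert i Dset)"]) (auto simp: finD)
    have ne: "Ss \<noteq> {}" using False by (simp add: Ss_def)
    have fd: "flip_differ (k-1) x' y = map_pmf (\<lambda>S. flip S x') (pmf_of_set Ss)"
      unfolding flip_differ_def Let_def E Ss_def[symmetric] using ne by simp
    have "u \<in> (\<lambda>S. flip S x') ` Ss" using u unfolding x'_def[symmetric] fd
      using set_pmf_of_set[OF ne fin] by simp
    then obtain S where S: "S \<subseteq> insert i Dset" "card S = k - 1" "u = flip S x'"
      unfolding Ss_def by blast
    have Ssub: "S \<subseteq> {..<length x'}" using S(1) lx' i by (auto simp: Dset_def Aset_def)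
    have "int (ones u) = int (ones x') + (if v then - int (card S) else int (card S))"
      unfolding S(3) by (rule ones_flip_const[OF Ssub]) (use S(1) vals in blast)
    then show ?thesis using ox' S(2) k1 by (auto simp: sg_def split: if_splits)
  qed
  then show ?thesis using jumpf_h by simp
qed

lemma bad_tests: assumes i: "i \<in> Aset" "x!i = v"
  shows "measure_pmf.prob (flip_differ (k-1) (flip {i} x) y) {u. jumpf n u \<noteq> n div 2} \<le> 1/2"
proof -
  define x' where "x' = flip {i} x"
  define E where "E = insert i Dset"
  define Ss where "Ss = {S. S \<subseteq> E \<and> card S = k - 1}"
  have lx': "length x' = n" using lx by (simp add: x'_def)
  have Ediff: "{j. j < length x' \<and> x' ! j \<noteq> y!j} = E" unfolding x'_def E_def by (rule flip_diff[OF i(1)])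
  have valsD: "\<forall>j \<in> Dset. x'!j = v" using flip_valD[OF i(1)] by (auto simp: x'_def)
  have ox': "int (ones x') = int h + sg * (int k - 1)" unfolding x'_def by (rule bad_ones[OF i])
  have finE: "finite E" using finD by (simp add: E_def)
  have cE: "card E = 2*k+1" using finD iD[OF i(1)] cardD by (simp add: E_def)
  have fin: "finite Ss" unfolding Ss_def by (rule finite_subset[of _ "Pow E"]) (auto simp: finE)
  have ne: "Ss \<noteq> {}"
  proof -
    have "k - 1 \<le> card E" using cE by simp
    then obtain T where "T \<subseteq> E" "card T = k - 1" "finite T" by (rule obtain_subset_with_card_n)
    then show ?thesis by (auto simp: Ss_def)
  qed
  have fd: "flip_differ (k-1) x' y = map_pmf (\<lambda>S. flip S x') (pmf_of_set Ss)"
    unfolding flip_differ_def Let_def Ediff Ss_def[symmetric] using ne by simp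
  have sub: "Ss \<inter> {S. jumpf n (flip S x') \<noteq> n div 2} \<subseteq> {S. S \<subseteq> E \<and> card S = k - 1 \<and> i \<in> S}"
  proof
    fix S assume S: "S \<in> Ss \<inter> {S. jumpf n (flip S x') \<noteq> n div 2}"
    show "S \<in> {S. S \<subseteq> E \<and> card S = k - 1 \<and> i \<in> S}"
    proof (rule ccontr)
      assume "S \<notin> {S. S \<subseteq> E \<and> card S = k - 1 \<and> i \<in> S}"
      then have SD: "S \<subseteq> Dset" and cS: "card S = k - 1" using S by (auto simp: Ss_def E_def)
      have Ssub: "S \<subseteq> {..<length x'}" using SD lx' by (auto simp: Dset_def)
      have "int (ones (flip S x')) = int (ones x') + (if v then - int (card S) else int (card S))"
        by (rule ones_flip_const[OF Ssub]) (use SD valsD in blast)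
      then have "ones (flip S x') = h" using ox' cS k1 by (auto simp: sg_def split: if_splits)
      then show False using S jumpf_h by simp
    qed
  qed
  have "measure_pmf.prob (flip_differ (k-1) x' y) {u. jumpf n u \<noteq> n div 2}
      = card (Ss \<inter> {S. jumpf n (flip S x') \<noteq> n div 2}) / card Ss"
    unfolding fd by (simp add: measure_pmf_of_set[OF ne fin] vimage_def)
  also have "\<dots> \<le> card {S. S \<subseteq> E \<and> card S = k - 1 \<and> i \<in> S} / card Ss"
    using sub fin by (intro divide_right_mono) (auto intro: card_mono finite_subset[of _ "Pow E"] simp: finE)
  also have "\<dots> \<le> 1/2"
  proof -
    have "2 * card {S. S \<subseteq> E \<and> card S = k - 1 \<and> i \<in> S} \<le> card Ss"
      unfolding Ss_def by (rule half_card[OF finE]) (use cE in \<open>auto simp: E_def\<close>)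
    moreover have "card Ss > 0" using fin ne by (simp add: card_gt_0_iff)
    ultimately show ?thesis by (simp add: field_simps)
  qed
  finally show ?thesis unfolding x'_def .
qed

end


lemma bint: "(\<And>\<omega>. \<bar>f \<omega>\<bar> \<le> Bd) \<Longrightarrow> integrable (measure_pmf M) (f :: _ \<Rightarrow> real)"
  by (rule measure_pmf.integrable_const_bound[where B=Bd]) auto

lemma prob_bind: "measure_pmf.prob (bind_pmf M f) A = (\<integral>\<omega>. measure_pmf.prob (f \<omega>) A \<partial>M)"
proof -
  have "ennreal (measure_pmf.prob (bind_pmf M f) A) = emeasure (bind_pmf M f) A"
    by (simp add: measure_pmf.emeasure_eq_measure)
  also have "\<dots> = (\<integral>\<^sup>+\<omega>. ennreal (measure_pmf.prob (f \<omega>) A) \<partial>M)"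
    unfolding emeasure_bind_pmf by (simp add: measure_pmf.emeasure_eq_measure)
  also have "\<dots> = ennreal (\<integral>\<omega>. measure_pmf.prob (f \<omega>) A \<partial>M)"
    by (rule nn_integral_eq_integral) (auto intro: bint[where Bd=1])
  finally show ?thesis by (subst (asm) ennreal_inj) (auto intro: integral_nonneg_AE)
qed

lemma int_mono_supp:
  assumes "\<And>\<omega>. \<omega> \<in> set_pmf M \<Longrightarrow> f \<omega> \<le> g \<omega>" "\<And>\<omega>. \<bar>f \<omega>\<bar> \<le> Bf" "\<And>\<omega>. \<bar>g \<omega>\<bar> \<le> Bg"
  shows "(\<integral>\<omega>. f \<omega> \<partial>M) \<le> (\<integral>\<omega>. (g \<omega> :: real) \<partial>M)"
  by (rule integral_mono_AE) (use assms in \<open>auto intro: bint simp: AE_measure_pmf_iff\<close>)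

lemma prob_mono_supp:
  assumes "\<And>\<omega>. \<omega> \<in> set_pmf M \<Longrightarrow> \<omega> \<in> A \<Longrightarrow> \<omega> \<in> C"
  shows "measure_pmf.prob M A \<le> measure_pmf.prob M C"
proof -
  have "measure_pmf.prob M A = measure_pmf.prob M (A \<inter> set_pmf M)" by (simp add: measure_Int_set_pmf)
  also have "\<dots> \<le> measure_pmf.prob M C" using assms by (intro measure_pmf.finite_measure_mono) auto
  finally show ?thesis .
qed

lemma sup_trick:
  fixes hh :: "'a \<Rightarrow> real"
  assumes bd: "\<And>a. hh a \<le> Bd" and r: "r < 1"
    and step: "\<And>a S. (\<And>a'. hh a' \<le> S) \<Longrightarrow> hh a \<le> c + r * S"
  shows "hh a \<le> c / (1 - r)"
proof -
  define S where "S = (SUP a. hh a)"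
  have bdd: "bdd_above (range hh)" by (rule bdd_aboveI[where M=Bd]) (use bd in auto)
  have le: "\<And>a'. hh a' \<le> S" unfolding S_def by (rule cSUP_upper[OF UNIV_I bdd])
  have "S \<le> c + r * S" unfolding S_def by (rule cSUP_least) (use step le S_def in auto)
  then have "S * (1 - r) \<le> c" by (simp add: algebra_simps)
  then have "S \<le> c / (1 - r)" using r by (simp add: pos_le_divide_eq)
  then show ?thesis using le[of a] by linarith
qed

lemma tests_set: "bc \<in> set_pmf (tests n k x' y j) \<Longrightarrow> snd bc \<le> j"
proof (induction j arbitrary: bc)
  case 0 then show ?case by simp
next
  case (Suc j) then show ?case by (auto split: if_splits)
qed

lemma tests_noB:
  assumes "\<And>u. u \<in> set_pmf (flip_differ (k-1) x' y) \<Longrightarrow> jumpf n u \<noteq> n div 2"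
  shows "bc \<in> set_pmf (tests n k x' y j) \<Longrightarrow> \<not> fst bc"
proof (induction j arbitrary: bc)
  case 0 then show ?case by simp
next
  case (Suc j) then show ?case using assms by (auto split: if_splits; blast)
qed

lemma tests_prob:
  assumes p: "measure_pmf.prob (flip_differ (k-1) x' y) {u. jumpf n u \<noteq> n div 2} \<le> 1/2"
  shows "measure_pmf.prob (tests n k x' y j) {bc. \<not> fst bc} \<le> (1/2)^j"
proof (induction j)
  case 0 then show ?case by simp
next
  case (Suc j)
  define U where "U = flip_differ (k-1) x' y"
  have "measure_pmf.prob (tests n k x' y (Suc j)) {bc. \<not> fst bc}
     = (\<integral>u. measure_pmf.prob (if jumpf n u = n div 2 then return_pmf (True, 1)
           else map_pmf (\<lambda>(b, c). (b, Suc c)) (tests n k x' y j)) {bc. \<not> fst bc} \<partial>U)"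
    by (simp add: U_def prob_bind)
  also have "\<dots> \<le> (\<integral>u. (1/2)^j * indicator {u. jumpf n u \<noteq> n div 2} u \<partial>U)"
  proof (rule int_mono_supp[where Bf=1 and Bg=1])
    fix u
    show "measure_pmf.prob (if jumpf n u = n div 2 then return_pmf (True, 1)
           else map_pmf (\<lambda>(b, c). (b, Suc c)) (tests n k x' y j)) {bc. \<not> fst bc}
        \<le> (1/2)^j * indicator {u. jumpf n u \<noteq> n div 2} u"
    proof (cases "jumpf n u = n div 2")
      case True then show ?thesis by simp
    next
      case False
      have "(\<lambda>(b, c). (b, Suc c)) -` {bc. \<not> fst bc} = {bc. \<not> fst bc}" by auto
      then show ?thesis using False Suc.IH by simp
    qed
  next
    fix u show "\<bar>measure_pmf.prob (if jumpf n u = n div 2 then return_pmf (True, 1)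
           else map_pmf (\<lambda>(b, c). (b, Suc c)) (tests n k x' y j)) {bc. \<not> fst bc}\<bar> \<le> 1" by simp
  next
    fix u show "\<bar>(1/2::real)^j * indicator {u. jumpf n u \<noteq> n div 2} u\<bar> \<le> 1"
      by (simp add: indicator_def power_le_one)
  qed
  also have "\<dots> = (1/2)^j * measure_pmf.prob U {u. jumpf n u \<noteq> n div 2}" by simp
  also have "\<dots> \<le> (1/2)^j * (1/2)" using p unfolding U_def by (intro mult_left_mono) auto
  finally show ?case by simp
qed

definition GG :: "real \<Rightarrow> real \<Rightarrow> real" where
  "GG M s = measure_pmf.prob (geometric_pmf (1/2)) {j. M * real (Suc j) > s}"

lemma GG_nonneg: "0 \<le> GG M s" by (simp add: GG_def)
lemma GG_le1: "GG M s \<le> 1" by (simp add: GG_def)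
lemma GG_mono: "s \<le> s' \<Longrightarrow> GG M s' \<le> GG M s"
  unfolding GG_def by (intro measure_pmf.finite_measure_mono) auto
lemma GG_small: assumes "0 \<le> M" "s < M" shows "GG M s = 1"
proof -
  have "{j. M * real (Suc j) > s} = UNIV"
  proof -
    have "\<And>j. M \<le> M * real (Suc j)" using assms(1) by (simp add: mult_le_cancel_left1)
    then show ?thesis using assms(2) by (auto intro: less_le_trans)
  qed
  then show ?thesis by (simp add: GG_def)
qed
lemma GG_rec: assumes "M \<le> s" shows "GG M s = 1/2 * GG M (s - M)"
proof -
  have gu: "geometric_pmf (1/2) = bernoulli_pmf (1/2) \<bind> (\<lambda>b. if b then return_pmf 0 else map_pmf Suc (geometric_pmf (1/2)))"
    by (rule geometric_bind_pmf_unfold) simp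
  have e: "Suc -` {j. M * real (Suc j) > s} = {j. M * real (Suc j) > s - M}"
    by (auto simp: algebra_simps)
  have e2: "{y. s < M * (2 + real y)} = {j. s - M < M * (1 + real j)}"
    by (auto simp: algebra_simps)
  have "GG M s = measure_pmf.prob (bernoulli_pmf (1/2) \<bind> (\<lambda>b. if b then return_pmf 0 else map_pmf Suc (geometric_pmf (1/2)))) {j. M * real (Suc j) > s}"
    unfolding GG_def by (subst gu) (rule refl)
  also have "\<dots> = 1/2 * GG M (s - M)"
    using assms by (simp add: prob_bind GG_def e e2)
  finally show ?thesis .
qed

lemma pow_bound:
  assumes n4: "4 \<le> n"
  shows "(1/2::real)^(num_tests n) \<le> 1 / (real n)^2" and "real (num_tests n) \<le> 1 + 2 * log 2 (real n)"
proof -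
  have l: "log 2 (real n) \<ge> 0" using n4 by simp
  have nn: "real (num_tests n) = of_int \<lfloor>2 * log 2 (real n)\<rfloor> + 1"
    unfolding num_tests_def using l by simp
  show "real (num_tests n) \<le> 1 + 2 * log 2 (real n)" using nn by linarith
  have ge: "2 * log 2 (real n) \<le> real (num_tests n)" using nn by linarith
  have "(real n)^2 = 2 powr (2 * log 2 (real n))"
  proof -
    have "2 powr (2 * log 2 (real n)) = 2 powr (log 2 (real n)) * 2 powr (log 2 (real n))"
      by (simp add: powr_add[symmetric])
    also have "\<dots> = real n * real n" using n4 by simp
    finally show ?thesis by (simp add: power2_eq_square)
  qed
  also have "\<dots> \<le> 2 powr (real (num_tests n))" using ge by (intro powr_mono) auto
  also have "\<dots> = 2 ^ num_tests n" by (simp add: powr_realpow)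
  finally have "(real n)^2 \<le> 2 ^ num_tests n" .
  moreover have "(real n)^2 > 0" using n4 by simp
  ultimately show "(1/2::real)^(num_tests n) \<le> 1 / (real n)^2"
    by (simp add: power_one_over divide_simps)
qed



context opp begin

definition "mm = num_tests n"
definition "BB = bind_pmf (flip_agree x y) (\<lambda>x'. map_pmf (\<lambda>(b,c). (x', b, c)) (tests n k x' y mm))"
definition "Pm t A = measure (measure_spmf (mf_loop n k x y t)) A"
definition "rr = measure_pmf.prob BB {\<omega>. fst (snd \<omega>)}"
definition "gg = measure_pmf.prob BB {\<omega>. \<not> fst (snd \<omega>) \<and> good (fst \<omega>)}"
definition "ee = measure_pmf.prob BB {\<omega>. \<not> fst (snd \<omega>) \<and> \<not> good (fst \<omega>)}"
definition "Mr = 1 + 2 * log 2 (real n)"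

lemma loop_eq: "mf_loop n k x y t = bind_pmf BB (\<lambda>(x',b,c). if b then mf_loop n k x y (t+c) else return_spmf (x', t+c))"
  by (subst mf_loop.simps) (simp add: BB_def mm_def bind_assoc_pmf map_pmf_def bind_return_pmf)

lemma Pm_nonneg: "0 \<le> Pm t A" by (simp add: Pm_def)
lemma Pm_le1: "Pm t A \<le> 1" unfolding Pm_def by (rule measure_spmf.subprob_measure_le_1)

lemma Pm_eq: "Pm t A = (\<integral>\<omega>. (if fst (snd \<omega>) then Pm (t + snd (snd \<omega>)) A else indicator A (fst \<omega>, t + snd (snd \<omega>))) \<partial>BB)"
proof -
  have "Pm t A = measure_pmf.prob (mf_loop n k x y t) (Some ` A)"
    unfolding Pm_def by (simp add: measure_measure_spmf_conv_measure_pmf)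
  also have "\<dots> = (\<integral>\<omega>. measure_pmf.prob ((\<lambda>(x',b,c). if b then mf_loop n k x y (t+c) else return_spmf (x', t+c)) \<omega>) (Some ` A) \<partial>BB)"
    by (subst loop_eq) (rule prob_bind)
  also have "\<dots> = (\<integral>\<omega>. (if fst (snd \<omega>) then Pm (t + snd (snd \<omega>)) A else indicator A (fst \<omega>, t + snd (snd \<omega>))) \<partial>BB)"
  proof (rule Bochner_Integration.integral_cong[OF refl])
    fix \<omega> :: "bool list \<times> bool \<times> nat"
    obtain x' b c where w: "\<omega> = (x', b, c)" by (cases \<omega>) auto
    have "indicator (Some ` A) (Some (x', t + c)) = (indicator A (x', t + c) :: real)"
      by (auto simp: indicator_def)
    then show "measure_pmf.prob ((\<lambda>(x',b,c). if b then mf_loop n k x y (t+c) else return_spmf (x', t+c)) \<omega>) (Some ` A)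
       = (if fst (snd \<omega>) then Pm (t + snd (snd \<omega>)) A else indicator A (fst \<omega>, t + snd (snd \<omega>)))"
      unfolding w by (simp add: Pm_def measure_measure_spmf_conv_measure_pmf)
  qed
  finally show ?thesis .
qed

lemma int3: "(\<integral>\<omega>. (if fst (snd \<omega>) then \<alpha> else if good (fst \<omega>) then \<beta> else \<gamma>) \<partial>BB) = \<alpha> * rr + \<beta> * gg + \<gamma> * ee"
proof -
  have ii: "\<And>S. integrable BB (indicator S :: _ \<Rightarrow> real)" by (rule bint[where Bd=1]) (simp add: indicator_def)
  define X1 where "X1 = {\<omega> :: bool list \<times> bool \<times> nat. fst (snd \<omega>)}"
  define X2 where "X2 = {\<omega> :: bool list \<times> bool \<times> nat. \<not> fst (snd \<omega>) \<and> good (fst \<omega>)}"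
  define X3 where "X3 = {\<omega> :: bool list \<times> bool \<times> nat. \<not> fst (snd \<omega>) \<and> \<not> good (fst \<omega>)}"
  have eq: "(\<lambda>\<omega>. if fst (snd \<omega>) then \<alpha> else if good (fst \<omega>) then \<beta> else \<gamma>)
     = (\<lambda>\<omega>. (\<alpha> * indicator X1 \<omega> + \<beta> * indicator X2 \<omega>) + \<gamma> * indicator X3 \<omega>)"
    by (auto simp: fun_eq_iff indicator_def X1_def X2_def X3_def)
  have i1: "integrable BB (\<lambda>\<omega>. \<alpha> * indicator X1 \<omega>)" "integrable BB (\<lambda>\<omega>. \<beta> * indicator X2 \<omega>)"
    "integrable BB (\<lambda>\<omega>. \<gamma> * indicator X3 \<omega>)" by (intro integrable_mult_right ii)+
  have "(\<integral>\<omega>. (\<alpha> * indicator X1 \<omega> + \<beta> * indicator X2 \<omega>) + \<gamma> * indicator X3 \<omega> \<partial>BB)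
     = (\<integral>\<omega>. \<alpha> * indicator X1 \<omega> \<partial>BB) + (\<integral>\<omega>. \<beta> * indicator X2 \<omega> \<partial>BB) + (\<integral>\<omega>. \<gamma> * indicator X3 \<omega> \<partial>BB)"
    by (simp add: Bochner_Integration.integral_add[OF Bochner_Integration.integrable_add[OF i1(1) i1(2)] i1(3)]
        Bochner_Integration.integral_add[OF i1(1) i1(2)])
  also have "\<dots> = \<alpha> * rr + \<beta> * gg + \<gamma> * ee"
    by (simp add: rr_def gg_def ee_def X1_def X2_def X3_def)
  finally show ?thesis unfolding eq .
qed

lemma sum1: "rr + gg + ee = 1"
proof -
  have e: "(\<lambda>\<omega>. (if fst (snd \<omega>) then 1 else if good (fst \<omega>) then 1 else 1)) = (\<lambda>\<omega>. 1::real)" by auto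
  have "(\<integral>\<omega>. (if fst (snd \<omega>) then 1 else if good (fst \<omega>) then 1 else 1) \<partial>BB) = (1::real)" unfolding e by simp
  then show ?thesis using int3[of 1 1 1] by simp
qed

lemma setB: "\<omega> \<in> set_pmf BB \<Longrightarrow> \<exists>i\<in>Aset. fst \<omega> = flip {i} x \<and> snd \<omega> \<in> set_pmf (tests n k (flip {i} x) y mm)"
  unfolding BB_def fa_eq using A_ne finA by (auto simp: set_pmf_of_set)

lemma B_c: "\<omega> \<in> set_pmf BB \<Longrightarrow> snd (snd \<omega>) \<le> mm"
  using setB tests_set by blast

lemma B_good: assumes w: "\<omega> \<in> set_pmf BB" and g: "good (fst \<omega>)" shows "\<not> fst (snd \<omega>)"
proof -
  obtain i where i: "i \<in> Aset" "fst \<omega> = flip {i} x" "snd \<omega> \<in> set_pmf (tests n k (flip {i} x) y mm)"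
    using setB[OF w] by blast
  show ?thesis
  proof (cases "x!i = v")
    case True
    then show ?thesis using bad_dd[OF i(1) True] g i(2) by (simp add: good_def)
  next
    case False
    show ?thesis by (rule tests_noB[OF good_tests[OF i(1) False] i(3)])
  qed
qed

lemma B_dd: assumes w: "\<omega> \<in> set_pmf BB" and d: "dd n (fst \<omega>) = k + 1" shows "good (fst \<omega>)"
proof -
  obtain i where i: "i \<in> Aset" "fst \<omega> = flip {i} x"
    using setB[OF w] by blast
  show ?thesis
  proof (cases "x!i = v")
    case True
    then show ?thesis using bad_dd[OF i(1) True] d i(2) by simp
  next
    case False
    then show ?thesis using good_flip[OF i(1) False] i(2) by simp
  qed
qed

lemma g_ge: "gg \<ge> 1/2"
proof -
  have hk: "0 < h - k" using kh' by simp
  have "measure_pmf.prob BB {\<omega>. good (fst \<omega>)} \<le> gg"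
    unfolding gg_def by (rule prob_mono_supp) (use B_good in auto)
  moreover have mapB: "map_pmf fst BB = flip_agree x y"
    unfolding BB_def by (simp add: map_bind_pmf pmf.map_comp o_def case_prod_beta bind_return_pmf')
  moreover have "measure_pmf.prob (flip_agree x y) {x'. good x'} \<ge> 1/2"
  proof -
    have "measure_pmf.prob (flip_agree x y) {x'. good x'} = measure_pmf.prob (pmf_of_set Aset) {i. good (flip {i} x)}"
      by (simp add: fa_eq vimage_def)
    also have "\<dots> \<ge> measure_pmf.prob (pmf_of_set Aset) {i. i \<in> Aset \<and> x!i \<noteq> v}"
      by (rule measure_pmf.finite_measure_mono) (use good_flip in auto)
    moreover have "measure_pmf.prob (pmf_of_set Aset) {i. i \<in> Aset \<and> x!i \<noteq> v} = 1/2"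
    proof -
      have "Aset \<inter> {i. i \<in> Aset \<and> x!i \<noteq> v} = {i. i < n \<and> x!i = y!i \<and> x!i \<noteq> v}"
        by (auto simp: Aset_def)
      then have "measure_pmf.prob (pmf_of_set Aset) {i. i \<in> Aset \<and> x!i \<noteq> v} = real (h - k) / real (2 * (h - k))"
        using struct(3) cardA by (simp add: measure_pmf_of_set[OF A_ne finA])
      then show ?thesis using hk by simp
    qed
    ultimately show ?thesis by simp
  qed
  moreover have "measure_pmf.prob BB {\<omega>. good (fst \<omega>)} = measure_pmf.prob (map_pmf fst BB) {x'. good x'}"
    by (simp add: vimage_def)
  ultimately show ?thesis by simp
qed

lemma e_le: "ee \<le> (1/2)^mm"
proof -
  have "ee = (\<integral>x'. measure_pmf.prob (map_pmf (\<lambda>(b,c). (x', b, c)) (tests n k x' y mm))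
               {\<omega>. \<not> fst (snd \<omega>) \<and> \<not> good (fst \<omega>)} \<partial>flip_agree x y)"
    unfolding ee_def BB_def by (rule prob_bind)
  also have "\<dots> \<le> (\<integral>x'. (1/2)^mm \<partial>flip_agree x y)"
  proof (rule int_mono_supp[where Bf=1 and Bg=1])
    fix x' assume x': "x' \<in> set_pmf (flip_agree x y)"
    then obtain i where i: "i \<in> Aset" "x' = flip {i} x" unfolding fa_eq using A_ne finA by auto
    have vim: "(\<lambda>(b,c). (x', b, c)) -` {\<omega>. \<not> fst (snd \<omega>) \<and> \<not> good (fst \<omega>)} = {bc. \<not> fst bc \<and> \<not> good x'}"
      by auto
    show "measure_pmf.prob (map_pmf (\<lambda>(b,c). (x', b, c)) (tests n k x' y mm))
               {\<omega>. \<not> fst (snd \<omega>) \<and> \<not> good (fst \<omega>)} \<le> (1/2)^mm"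
    proof (cases "good x'")
      case True then show ?thesis unfolding measure_map_pmf vim by simp
    next
      case False
      then have xi: "x!i = v" using good_flip[OF i(1)] i(2) by blast
      have "measure_pmf.prob (tests n k x' y mm) {bc. \<not> fst bc \<and> \<not> good x'} = measure_pmf.prob (tests n k x' y mm) {bc. \<not> fst bc}"
        using False by simp
      also have "\<dots> \<le> (1/2)^mm" unfolding i(2) by (rule tests_prob[OF bad_tests[OF i(1) xi]])
      finally show ?thesis unfolding measure_map_pmf vim .
    qed
  qed (auto simp: power_le_one)
  also have "\<dots> = (1/2)^mm" by simp
  finally show ?thesis .
qed

lemma ee_nonneg: "0 \<le> ee" by (simp add: ee_def)
lemma rr_facts: "rr < 1" "rr \<le> 1/2" "0 \<le> rr" "1 - rr = gg + ee"
  using sum1 g_ge ee_nonneg by (auto simp: rr_def)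

lemma lossless: "Pm t UNIV = 1"
proof -
  have "1 - Pm t UNIV \<le> 0 / (1 - rr)"
  proof (rule sup_trick[where hh="\<lambda>t. 1 - Pm t UNIV" and Bd=1 and r=rr])
    fix t show "1 - Pm t UNIV \<le> 1" using Pm_nonneg by simp
  next
    show "rr < 1" by (rule rr_facts)
  next
    fix t S assume S: "\<And>t'. 1 - Pm t' UNIV \<le> S"
    have "(\<integral>\<omega>. (if fst (snd \<omega>) then 1 - S else if good (fst \<omega>) then 1 else 1) \<partial>BB)
        \<le> (\<integral>\<omega>. (if fst (snd \<omega>) then Pm (t + snd (snd \<omega>)) UNIV else indicator UNIV (fst \<omega>, t + snd (snd \<omega>))) \<partial>BB)"
    proof (rule int_mono_supp[where Bf="1 + \<bar>S\<bar>" and Bg=1])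
      fix \<omega> :: "bool list \<times> bool \<times> nat"
      show "(if fst (snd \<omega>) then 1 - S else if good (fst \<omega>) then 1 else 1)
          \<le> (if fst (snd \<omega>) then Pm (t + snd (snd \<omega>)) UNIV else indicator UNIV (fst \<omega>, t + snd (snd \<omega>)))"
        using S[of "t + snd (snd \<omega>)"] by auto
    next
      fix \<omega> :: "bool list \<times> bool \<times> nat"
      show "\<bar>if fst (snd \<omega>) then Pm (t + snd (snd \<omega>)) UNIV else indicator UNIV (fst \<omega>, t + snd (snd \<omega>))\<bar> \<le> 1"
        using Pm_nonneg[of "t + snd (snd \<omega>)" UNIV] Pm_le1[of "t + snd (snd \<omega>)" UNIV] by auto
    qed auto
    then have "(1 - S) * rr + gg + ee \<le> Pm t UNIV" unfolding int3 Pm_eq[of t UNIV, symmetric] by simp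
    then show "1 - Pm t UNIV \<le> 0 + rr * S" using sum1 by (simp add: algebra_simps)
  qed
  then show ?thesis using Pm_le1[of t UNIV] by simp
qed

lemma compl: "Pm t A + Pm t (-A) = Pm t UNIV"
proof -
  have "Some ` A \<union> Some ` (-A) = Some ` UNIV" by auto
  moreover have "Some ` A \<inter> Some ` (-A) = {}" by auto
  ultimately show ?thesis unfolding Pm_def measure_measure_spmf_conv_measure_pmf
    by (metis measure_pmf.finite_measure_Union sets_measure_pmf UNIV_I)
qed

lemma notQ: assumes Q: "\<And>x'. good x' \<Longrightarrow> Q x'"
  shows "Pm t {(x', T). \<not> Q x'} \<le> ee / (1 - rr)"
proof (rule sup_trick[where hh="\<lambda>t. Pm t {(x', T). \<not> Q x'}" and Bd=1 and r=rr and c=ee])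
  fix t show "Pm t {(x', T). \<not> Q x'} \<le> 1" by (rule Pm_le1)
next
  show "rr < 1" by (rule rr_facts)
next
  fix t S assume S: "\<And>t'. Pm t' {(x', T). \<not> Q x'} \<le> S"
  have "Pm t {(x', T). \<not> Q x'} \<le> (\<integral>\<omega>. (if fst (snd \<omega>) then S else if good (fst \<omega>) then 0 else 1) \<partial>BB)"
    unfolding Pm_eq[of t]
  proof (rule int_mono_supp[where Bg="1 + \<bar>S\<bar>" and Bf=1])
    fix \<omega> :: "bool list \<times> bool \<times> nat"
    show "(if fst (snd \<omega>) then Pm (t + snd (snd \<omega>)) {(x', T). \<not> Q x'} else indicator {(x', T). \<not> Q x'} (fst \<omega>, t + snd (snd \<omega>)))
        \<le> (if fst (snd \<omega>) then S else if good (fst \<omega>) then 0 else 1)"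
      using S[of "t + snd (snd \<omega>)"] Q by (auto simp: indicator_def)
  next
    fix \<omega> :: "bool list \<times> bool \<times> nat"
    show "\<bar>if fst (snd \<omega>) then Pm (t + snd (snd \<omega>)) {(x', T). \<not> Q x'} else indicator {(x', T). \<not> Q x'} (fst \<omega>, t + snd (snd \<omega>))\<bar> \<le> 1"
      using Pm_nonneg[of "t + snd (snd \<omega>)"] Pm_le1[of "t + snd (snd \<omega>)"] by (auto simp: indicator_def)
  qed auto
  then show "Pm t {(x', T). \<not> Q x'} \<le> ee + rr * S" unfolding int3 by (simp add: algebra_simps)
qed

lemma PQ: assumes Q: "\<And>x'. good x' \<Longrightarrow> Q x'"
  shows "gg / (1 - rr) \<le> Pm t {(x', T). Q x'}"
proof -
  have c: "- {(x', T). Q x'} = {(x', T::nat). \<not> Q x'}" by auto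
  have "Pm t {(x', T). Q x'} = 1 - Pm t {(x', T). \<not> Q x'}"
    using compl[of t "{(x', T). Q x'}"] lossless[of t] unfolding c by simp
  moreover have "Pm t {(x', T). \<not> Q x'} \<le> ee / (1 - rr)" by (rule notQ[OF Q])
  moreover have "1 - ee / (1 - rr) = gg / (1 - rr)" using rr_facts by (simp add: field_simps)
  ultimately show ?thesis by linarith
qed

lemma Mr_facts: "real mm \<le> Mr" "1 \<le> Mr"
  using pow_bound(2)[OF n4] n4 by (auto simp: mm_def Mr_def)

lemma tail: "Pm t0 {(x', T). real T > t} \<le> GG Mr (t - real t0)"
proof -
  define hh where "hh = (\<lambda>a::nat \<times> real. Pm (fst a) {(x', T). real T > snd a} - GG Mr (snd a - real (fst a)))"
  have "hh (t0, t) \<le> 0 / (1 - rr)"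
  proof (rule sup_trick[where hh=hh and Bd=1 and r=rr])
    fix a :: "nat \<times> real" show "hh a \<le> 1"
      unfolding hh_def using Pm_le1[of "fst a"] GG_nonneg[of Mr] by (simp add: diff_le_eq add_increasing2)
  next
    show "rr < 1" by (rule rr_facts)
  next
    fix a :: "nat \<times> real" and S
    assume S0: "\<And>a'. hh a' \<le> S"
    obtain t0 t where a: "a = (t0, t)" by (cases a)
    define ST where "ST = {(x' :: bool list, T::nat). real T > t}"
    have S: "\<And>t'. Pm t' ST \<le> GG Mr (t - real t') + S"
    proof -
      fix t' have "hh (t', t) \<le> S" by (rule S0)
      then show "Pm t' ST \<le> GG Mr (t - real t') + S" by (simp add: hh_def ST_def)
    qed
    have "Pm t0 ST \<le> GG Mr (t - real t0) + rr * S"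
    proof (cases "t - real t0 < Mr")
      case True
      have "Pm t0 ST \<le> (\<integral>\<omega>. (if fst (snd \<omega>) then 1 + S else if good (fst \<omega>) then 1 else 1) \<partial>BB)"
        unfolding Pm_eq[of t0]
      proof (rule int_mono_supp[where Bg="1 + \<bar>S\<bar>" and Bf=1])
        fix \<omega> :: "bool list \<times> bool \<times> nat"
        show "(if fst (snd \<omega>) then Pm (t0 + snd (snd \<omega>)) ST else indicator ST (fst \<omega>, t0 + snd (snd \<omega>)))
            \<le> (if fst (snd \<omega>) then 1 + S else if good (fst \<omega>) then 1 else 1)"
          using S[of "t0 + snd (snd \<omega>)"] GG_le1[of Mr "t - real (t0 + snd (snd \<omega>))"]
          by (auto simp: indicator_def)
      next
        fix \<omega> :: "bool list \<times> bool \<times> nat"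
        show "\<bar>if fst (snd \<omega>) then Pm (t0 + snd (snd \<omega>)) ST else indicator ST (fst \<omega>, t0 + snd (snd \<omega>))\<bar> \<le> 1"
          using Pm_nonneg[of "t0 + snd (snd \<omega>)"] Pm_le1[of "t0 + snd (snd \<omega>)"] by (auto simp: indicator_def)
      qed auto
      also have "\<dots> = (1 + S) * rr + gg + ee" using int3[of "1 + S" 1 1] by simp
      also have "\<dots> = GG Mr (t - real t0) + rr * S"
        using sum1 GG_small[of Mr "t - real t0"] True Mr_facts by (simp add: algebra_simps)
      finally show ?thesis .
    next
      case False
      have "Pm t0 ST \<le> (\<integral>\<omega>. (if fst (snd \<omega>) then GG Mr (t - real t0 - Mr) + S else if good (fst \<omega>) then 0 else 0) \<partial>BB)"
        unfolding Pm_eq[of t0]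
      proof (rule int_mono_supp[where Bg="1 + \<bar>S\<bar>" and Bf=1])
        fix \<omega> :: "bool list \<times> bool \<times> nat" assume w: "\<omega> \<in> set_pmf BB"
        have c: "real (snd (snd \<omega>)) \<le> Mr" using B_c[OF w] Mr_facts(1) by linarith
        have g: "GG Mr (t - real (t0 + snd (snd \<omega>))) \<le> GG Mr (t - real t0 - Mr)"
          by (rule GG_mono) (use c in simp)
        show "(if fst (snd \<omega>) then Pm (t0 + snd (snd \<omega>)) ST else indicator ST (fst \<omega>, t0 + snd (snd \<omega>)))
            \<le> (if fst (snd \<omega>) then GG Mr (t - real t0 - Mr) + S else if good (fst \<omega>) then 0 else 0)"
          using S[of "t0 + snd (snd \<omega>)"] g c False by (auto simp: ST_def indicator_def)
      next
        fix \<omega> :: "bool list \<times> bool \<times> nat"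
        show "\<bar>if fst (snd \<omega>) then Pm (t0 + snd (snd \<omega>)) ST else indicator ST (fst \<omega>, t0 + snd (snd \<omega>))\<bar> \<le> 1"
          using Pm_nonneg[of "t0 + snd (snd \<omega>)"] Pm_le1[of "t0 + snd (snd \<omega>)"] by (auto simp: indicator_def)
      next
        fix \<omega> :: "bool list \<times> bool \<times> nat"
        show "\<bar>if fst (snd \<omega>) then GG Mr (t - real t0 - Mr) + S else if good (fst \<omega>) then 0 else 0\<bar> \<le> 1 + \<bar>S\<bar>"
          using GG_nonneg[of Mr "t - real t0 - Mr"] GG_le1[of Mr "t - real t0 - Mr"] by auto
      qed
      also have "\<dots> = (GG Mr (t - real t0 - Mr) + S) * rr" using int3 by simp
      also have "\<dots> \<le> 1/2 * GG Mr (t - real t0 - Mr) + rr * S"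
      proof -
        have "GG Mr (t - real t0 - Mr) * rr \<le> GG Mr (t - real t0 - Mr) * (1/2)"
          using rr_facts GG_nonneg[of Mr "t - real t0 - Mr"] by (intro mult_left_mono) auto
        then show ?thesis by (simp add: algebra_simps)
      qed
      also have "\<dots> = GG Mr (t - real t0) + rr * S" using GG_rec[of Mr "t - real t0"] False by simp
      finally show ?thesis .
    qed
    then show "hh a \<le> 0 + rr * S" unfolding a hh_def ST_def by simp
  qed
  then show ?thesis unfolding hh_def by simp
qed

definition "LL = gg / (1 - rr)"

lemma LL_facts: "0 \<le> LL" "rr * LL + gg = LL"
proof -
  have p: "0 < 1 - rr" using rr_facts by simp
  show "0 \<le> LL" unfolding LL_def using p g_ge by simp
  have "LL * (1 - rr) = gg" unfolding LL_def using p by simp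
  then show "rr * LL + gg = LL" by (simp add: algebra_simps)
qed

lemma ctail: "Pm t0 {(x', T). real T > t \<and> dd n x' = k + 1} \<le> GG Mr (t - real t0) * LL"
proof -
  define hh where "hh = (\<lambda>a::nat \<times> real. Pm (fst a) {(x', T). real T > snd a \<and> dd n x' = k + 1} - GG Mr (snd a - real (fst a)) * LL)"
  have "hh (t0, t) \<le> 0 / (1 - rr)"
  proof (rule sup_trick[where hh=hh and Bd=1 and r=rr])
    fix a :: "nat \<times> real" show "hh a \<le> 1"
      unfolding hh_def using Pm_le1[of "fst a"] GG_nonneg[of Mr] LL_facts(1) by (simp add: diff_le_eq add_increasing2)
  next
    show "rr < 1" by (rule rr_facts)
  next
    fix a :: "nat \<times> real" and S
    assume S0: "\<And>a'. hh a' \<le> S"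
    obtain t0 t where a: "a = (t0, t)" by (cases a)
    define ST where "ST = {(x' :: bool list, T::nat). real T > t \<and> dd n x' = k + 1}"
    have S: "\<And>t'. Pm t' ST \<le> GG Mr (t - real t') * LL + S"
    proof -
      fix t' have "hh (t', t) \<le> S" by (rule S0)
      then show "Pm t' ST \<le> GG Mr (t - real t') * LL + S" by (simp add: hh_def ST_def)
    qed
    have L0: "0 \<le> LL" by (rule LL_facts)
    have "Pm t0 ST \<le> GG Mr (t - real t0) * LL + rr * S"
    proof (cases "t - real t0 < Mr")
      case True
      have "Pm t0 ST \<le> (\<integral>\<omega>. (if fst (snd \<omega>) then LL + S else if good (fst \<omega>) then 1 else 0) \<partial>BB)"
        unfolding Pm_eq[of t0]
      proof (rule int_mono_supp[where Bg="1 + LL + \<bar>S\<bar>" and Bf=1])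
        fix \<omega> :: "bool list \<times> bool \<times> nat" assume w: "\<omega> \<in> set_pmf BB"
        have "GG Mr (t - real (t0 + snd (snd \<omega>))) * LL \<le> LL"
          by (rule mult_left_le_one_le[OF L0 GG_nonneg GG_le1])
        then show "(if fst (snd \<omega>) then Pm (t0 + snd (snd \<omega>)) ST else indicator ST (fst \<omega>, t0 + snd (snd \<omega>)))
            \<le> (if fst (snd \<omega>) then LL + S else if good (fst \<omega>) then 1 else 0)"
          using S[of "t0 + snd (snd \<omega>)"] B_dd[OF w] by (auto simp: indicator_def ST_def)
      next
        fix \<omega> :: "bool list \<times> bool \<times> nat"
        show "\<bar>if fst (snd \<omega>) then Pm (t0 + snd (snd \<omega>)) ST else indicator ST (fst \<omega>, t0 + snd (snd \<omega>))\<bar> \<le> 1"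
          using Pm_nonneg[of "t0 + snd (snd \<omega>)"] Pm_le1[of "t0 + snd (snd \<omega>)"] by (auto simp: indicator_def)
      next
        fix \<omega> :: "bool list \<times> bool \<times> nat"
        show "\<bar>if fst (snd \<omega>) then LL + S else if good (fst \<omega>) then 1 else 0\<bar> \<le> 1 + LL + \<bar>S\<bar>"
          using L0 by auto
      qed
      also have "\<dots> = (LL + S) * rr + gg" using int3[of "LL + S" 1 0] by simp
      also have "\<dots> = GG Mr (t - real t0) * LL + rr * S"
        using LL_facts GG_small[of Mr "t - real t0"] True Mr_facts by (simp add: algebra_simps)
      finally show ?thesis .
    next
      case False
      have "Pm t0 ST \<le> (\<integral>\<omega>. (if fst (snd \<omega>) then GG Mr (t - real t0 - Mr) * LL + S else if good (fst \<omega>) then 0 else 0) \<partial>BB)"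
        unfolding Pm_eq[of t0]
      proof (rule int_mono_supp[where Bg="1 + LL + \<bar>S\<bar>" and Bf=1])
        fix \<omega> :: "bool list \<times> bool \<times> nat" assume w: "\<omega> \<in> set_pmf BB"
        have c: "real (snd (snd \<omega>)) \<le> Mr" using B_c[OF w] Mr_facts(1) by linarith
        have g: "GG Mr (t - real (t0 + snd (snd \<omega>))) * LL \<le> GG Mr (t - real t0 - Mr) * LL"
          by (rule mult_right_mono[OF GG_mono L0]) (use c in simp)
        show "(if fst (snd \<omega>) then Pm (t0 + snd (snd \<omega>)) ST else indicator ST (fst \<omega>, t0 + snd (snd \<omega>)))
            \<le> (if fst (snd \<omega>) then GG Mr (t - real t0 - Mr) * LL + S else if good (fst \<omega>) then 0 else 0)"
          using S[of "t0 + snd (snd \<omega>)"] g c False by (auto simp: ST_def indicator_def)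
      next
        fix \<omega> :: "bool list \<times> bool \<times> nat"
        show "\<bar>if fst (snd \<omega>) then Pm (t0 + snd (snd \<omega>)) ST else indicator ST (fst \<omega>, t0 + snd (snd \<omega>))\<bar> \<le> 1"
          using Pm_nonneg[of "t0 + snd (snd \<omega>)"] Pm_le1[of "t0 + snd (snd \<omega>)"] by (auto simp: indicator_def)
      next
        fix \<omega> :: "bool list \<times> bool \<times> nat"
        have "GG Mr (t - real t0 - Mr) * LL \<le> LL"
          by (rule mult_left_le_one_le[OF L0 GG_nonneg GG_le1])
        then show "\<bar>if fst (snd \<omega>) then GG Mr (t - real t0 - Mr) * LL + S else if good (fst \<omega>) then 0 else 0\<bar> \<le> 1 + LL + \<bar>S\<bar>"
          using mult_nonneg_nonneg[OF GG_nonneg[of Mr "t - real t0 - Mr"] L0] L0 by (auto simp: abs_le_iff)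
      qed
      also have "\<dots> = (GG Mr (t - real t0 - Mr) * LL + S) * rr" using int3 by simp
      also have "\<dots> \<le> 1/2 * GG Mr (t - real t0 - Mr) * LL + rr * S"
      proof -
        have "GG Mr (t - real t0 - Mr) * LL * rr \<le> GG Mr (t - real t0 - Mr) * LL * (1/2)"
          using rr_facts GG_nonneg[of Mr "t - real t0 - Mr"] L0 by (intro mult_left_mono) auto
        then show ?thesis by (simp add: algebra_simps)
      qed
      also have "\<dots> = GG Mr (t - real t0) * LL + rr * S" using GG_rec[of Mr "t - real t0"] False by simp
      finally show ?thesis .
    qed
    then show "hh a \<le> 0 + rr * S" unfolding a hh_def ST_def by simp
  qed
  then show ?thesis unfolding hh_def by simp
qed

lemma main:
  "1 - Pm 0 {(x', T). real T \<le> t} \<le> GG Mr t"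
  "Pm 0 {(x', T). real T > t \<and> dd n x' = k + 1} \<le> GG Mr t * Pm 0 {(x', T). dd n x' = k + 1}"
  "Pm 0 {(x', T). dd n x' = k + 1 \<and> hamming x x' = 1 \<and> hamming x' y = 2 * k + 1} \<ge> 1 - 2 * log 2 n / real n ^ 2"
proof -
  have c: "- {(x', T::nat). real T \<le> t} = {(x', T). real T > t}" by auto
  have "Pm 0 {(x', T). real T \<le> t} + Pm 0 {(x', T). real T > t} = 1"
    using compl[of 0 "{(x', T). real T \<le> t}"] lossless[of 0] unfolding c by simp
  then show "1 - Pm 0 {(x', T). real T \<le> t} \<le> GG Mr t" using tail[of 0 t] by simp
  have "Pm 0 {(x', T). real T > t \<and> dd n x' = k + 1} \<le> GG Mr t * LL" using ctail[of 0 t] by simp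
  also have "\<dots> \<le> GG Mr t * Pm 0 {(x', T). dd n x' = k + 1}"
    using PQ[of "\<lambda>x'. dd n x' = k + 1" 0] GG_nonneg[of Mr t] unfolding LL_def
    by (intro mult_left_mono) (auto simp: good_def)
  finally show "Pm 0 {(x', T). real T > t \<and> dd n x' = k + 1} \<le> GG Mr t * Pm 0 {(x', T). dd n x' = k + 1}" .
  have q: "gg / (1 - rr) \<le> Pm 0 {(x', T). dd n x' = k + 1 \<and> hamming x x' = 1 \<and> hamming x' y = 2 * k + 1}"
    using PQ[of "\<lambda>x'. dd n x' = k + 1 \<and> hamming x x' = 1 \<and> hamming x' y = 2 * k + 1" 0] by (simp add: good_def)
  have p: "1/2 \<le> 1 - rr" using rr_facts g_ge ee_nonneg by simp
  have "gg / (1 - rr) = 1 - ee / (1 - rr)" using rr_facts p by (simp add: field_simps)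
  moreover have "ee / (1 - rr) \<le> ee / (1/2)" using p ee_nonneg by (intro divide_left_mono) auto
  moreover have "ee \<le> 1 / real n ^ 2" using e_le pow_bound(1)[OF n4] unfolding mm_def by linarith
  moreover have "2 / real n ^ 2 \<le> 2 * log 2 n / real n ^ 2"
  proof -
    have "1 \<le> log 2 (real n)" using n4 by simp
    then show ?thesis using n4 by (intro divide_right_mono) auto
  qed
  ultimately show "Pm 0 {(x', T). dd n x' = k + 1 \<and> hamming x x' = 1 \<and> hamming x' y = 2 * k + 1} \<ge> 1 - 2 * log 2 n / real n ^ 2"
    using q by (simp add: field_simps) 
qed

end

theorem lemma13:
  fixes n k :: nat and x y :: "bool list"
  assumes "even n" and "n \<ge> 4" and "1 \<le> k" and "k \<le> n div 2 - 1"
  shows "unbiased2 n flip_agree \<and> unbiased2 n (flip_differ (k - 1))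
    \<and> (opposing_pair n k x y \<longrightarrow>
      (\<forall>t::real.
         1 - measure (measure_spmf (moveFirst n k x y)) {(x', T). real T \<le> t}
         \<le> measure_pmf.prob (geometric_pmf (1/2)) {m. (1 + 2 * log 2 n) * real (Suc m) > t})
      \<and> (\<forall>t::real.
         measure (measure_spmf (moveFirst n k x y)) {(x', T). real T > t \<and> dd n x' = k + 1}
         \<le> measure_pmf.prob (geometric_pmf (1/2)) {m. (1 + 2 * log 2 n) * real (Suc m) > t}
            * measure (measure_spmf (moveFirst n k x y)) {(x', T). dd n x' = k + 1})
      \<and> measure (measure_spmf (moveFirst n k x y))
          {(x', T). dd n x' = k + 1 \<and> hamming x x' = 1 \<and> hamming x' y = 2 * k + 1}
        \<ge> 1 - 2 * log 2 n / real n ^ 2)"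
proof -
  have u1: "unbiased2 n flip_agree" by (rule unb_agree)
  have u2: "unbiased2 n (flip_differ (k - 1))" by (rule unb_differ)
  have rest: "opposing_pair n k x y \<longrightarrow>
      (\<forall>t::real.
         1 - measure (measure_spmf (moveFirst n k x y)) {(x', T). real T \<le> t}
         \<le> measure_pmf.prob (geometric_pmf (1/2)) {m. (1 + 2 * log 2 n) * real (Suc m) > t})
      \<and> (\<forall>t::real.
         measure (measure_spmf (moveFirst n k x y)) {(x', T). real T > t \<and> dd n x' = k + 1}
         \<le> measure_pmf.prob (geometric_pmf (1/2)) {m. (1 + 2 * log 2 n) * real (Suc m) > t}
            * measure (measure_spmf (moveFirst n k x y)) {(x', T). dd n x' = k + 1})
      \<and> measure (measure_spmf (moveFirst n k x y))
          {(x', T). dd n x' = k + 1 \<and> hamming x x' = 1 \<and> hamming x' y = 2 * k + 1}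
        \<ge> 1 - 2 * log 2 n / real n ^ 2"
  proof
    assume op: "opposing_pair n k x y"
    interpret O: opp n k x y using assms op by unfold_locales auto
    have e: "\<And>A. measure (measure_spmf (moveFirst n k x y)) A = O.Pm 0 A"
      by (simp add: moveFirst_def O.Pm_def)
    have g: "\<And>t. measure_pmf.prob (geometric_pmf (1/2)) {m. (1 + 2 * log 2 n) * real (Suc m) > t} = GG O.Mr t"
      by (simp add: GG_def O.Mr_def)
    show "(\<forall>t::real.
         1 - measure (measure_spmf (moveFirst n k x y)) {(x', T). real T \<le> t}
         \<le> measure_pmf.prob (geometric_pmf (1/2)) {m. (1 + 2 * log 2 n) * real (Suc m) > t})
      \<and> (\<forall>t::real.
         measure (measure_spmf (moveFirst n k x y)) {(x', T). real T > t \<and> dd n x' = k + 1}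
         \<le> measure_pmf.prob (geometric_pmf (1/2)) {m. (1 + 2 * log 2 n) * real (Suc m) > t}
            * measure (measure_spmf (moveFirst n k x y)) {(x', T). dd n x' = k + 1})
      \<and> measure (measure_spmf (moveFirst n k x y))
          {(x', T). dd n x' = k + 1 \<and> hamming x x' = 1 \<and> hamming x' y = 2 * k + 1}
        \<ge> 1 - 2 * log 2 n / real n ^ 2"
      unfolding e g using O.main by blast
  qed
  show ?thesis using u1 u2 rest by blast
qed

end
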